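(* Let $\mathcal{V}$ be a multivector field on a Lefschetz complex $X$ and let $\varphi:\mathbb{Z}\to X$ be an essential solution of $\mathcal{V}$. Then both limit sets $\alpha(\varphi)$ and $\omega(\varphi)$ are nonempty isolated invariant sets.
   Context: A Lefschetz complex over a field $F$ is a pair $(X,\kappa)$ with $X$ a finite graded set $X=\bigsqcup_{k\ge0}X_k$ and $\kappa:X\times X\to F$ such that $\kappa(x,y)\ne0$ implies $x\in X_k,y\in X_{k-1}$ for some $k$, and $\sum_z\kappa(x,z)\kappa(z,y)=0$. The face relation $\le$ is the partial order generated by $y\le x$ whenever $\kappa(x,y)\ne0$. $\mathrm{cl}\,C$ denotes the set of all faces of elements of $C$; $C$ is closed if $C=\mathrm{cl}\,C$; $C$ is locally closed if $\mathrm{mo}\,C=\mathrm{cl}\,C\setminus C$ is closed. For locally closed $C$, the relative homology $H_*(\mathrm{cl}\,C,\mathrm{mo}\,C)$ (of the chain complex with boundary $\partial x=\sum_y\kappa(x,y)y$) is defined. A multivector field $\mathcal{V}$ is a partition of $X$ into locally closed sets (multivectors); a multivector $V$ is regular if $H_*(\mathrm{cl}\,V,\mathrm{mo}\,V)=0$ and critical otherwise; $[x]_{\mathcal V}$ is the multivector containing $x$. The flow map is the multivalued map $\Pi_{\mathcal V}(x)=\mathrm{cl}\{x\}\cup[x]_{\mathcal V}$. A path is a finite sequence $x_0,\dots,x_n$ with $x_k\in\Pi_{\mathcal V}(x_{k-1})$; a solution is a map $\rho:\mathbb{Z}\to X$ with $\rho(k+1)\in\Pi_{\mathcal V}(\rho(k))$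 for all $k$. A solution $\rho$ is essential if whenever $\rho(k)$ lies in a regular multivector $V$, there exist integers $\ell_1<k<\ell_2$ with $\rho(\ell_1),\rho(\ell_2)\notin V$. A set $A\subset X$ is invariant if for every $x\in A$ there is an essential solution $\rho$ with $\rho(0)=x$ and $\rho(\mathbb{Z})\subset A$. A set is $\mathcal V$-compatible if it is a union of multivectors. A closed set $N$ isolates an invariant set $S\subset N$ if every path in $N$ with both endpoints in $S$ lies entirely in $S$, and $\Pi_{\mathcal V}(S)\subset N$; $S$ is an isolated invariant set if some closed $N$ isolates it. The $\mathcal V$-hull $\langle A\rangle_{\mathcal V}$ of $A\subset X$ is the intersection of all $\mathcal V$-compatible locally closed sets containing $A$. For a solution $\varphi$, $\alpha(\varphi)=\langle\bigcap_{t\in\mathbb{Z}^-}\varphi((-\infty,t])\rangle_{\mathcal V}$ and $\omega(\varphi)=\langle\bigcap_{t\in\mathbb{Z}^+}\varphi([t,\infty))\rangle_{\mathcal V}$. *)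

theory Defs
  imports Main
begin

definition lefschetz_complex :: "'a set \<Rightarrow> ('a \<Rightarrow> nat) \<Rightarrow> ('a \<Rightarrow> 'a \<Rightarrow> 'f::field) \<Rightarrow> bool" where
  "lefschetz_complex X dim kappa \<longleftrightarrow>
     finite X \<and>
     (\<forall>x y. kappa x y \<noteq> 0 \<longrightarrow> x \<in> X \<and> y \<in> X \<and> dim x = dim y + 1) \<and>
     (\<forall>x\<in>X. \<forall>y\<in>X. (\<Sum>z\<in>X. kappa x z * kappa z y) = 0)"

definition face_rel :: "('a \<Rightarrow> 'a \<Rightarrow> 'f::field) \<Rightarrow> ('a \<times> 'a) set" where
  "face_rel kappa = {(y, x). kappa x y \<noteq> 0}\<^sup>*"

definition lcl :: "('a \<Rightarrow> 'a \<Rightarrow> 'f::field) \<Rightarrow> 'a set \<Rightarrow> 'a set" where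
  "lcl kappa C = {y. \<exists>x\<in>C. (y, x) \<in> face_rel kappa}"

definition lclosed :: "('a \<Rightarrow> 'a \<Rightarrow> 'f::field) \<Rightarrow> 'a set \<Rightarrow> bool" where
  "lclosed kappa C \<longleftrightarrow> lcl kappa C = C"

definition mouth :: "('a \<Rightarrow> 'a \<Rightarrow> 'f::field) \<Rightarrow> 'a set \<Rightarrow> 'a set" where
  "mouth kappa C = lcl kappa C - C"

definition locally_closed :: "('a \<Rightarrow> 'a \<Rightarrow> 'f::field) \<Rightarrow> 'a set \<Rightarrow> bool" where
  "locally_closed kappa C \<longleftrightarrow> lclosed kappa (mouth kappa C)"

text \<open>Vanishing of the relative homology H_*(cl C, mo C) for locally closed C.
  The relative chain complex has basis cl C - mo C = C; a k-chain is a function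
  supported on the elements of C of degree k, and the relative boundary is
  (d c)(y) = sum over x in C of c x * kappa x y, for y in C.\<close>
definition rel_boundary :: "('a \<Rightarrow> 'a \<Rightarrow> 'f::field) \<Rightarrow> 'a set \<Rightarrow> ('a \<Rightarrow> 'f) \<Rightarrow> 'a \<Rightarrow> 'f" where
  "rel_boundary kappa C c = (\<lambda>y. if y \<in> C then (\<Sum>x\<in>C. c x * kappa x y) else 0)"

definition chain_in :: "('a \<Rightarrow> nat) \<Rightarrow> 'a set \<Rightarrow> nat \<Rightarrow> ('a \<Rightarrow> 'f::zero) \<Rightarrow> bool" where
  "chain_in dim C k c \<longleftrightarrow> (\<forall>x. c x \<noteq> 0 \<longrightarrow> x \<in> C \<and> dim x = k)"

definition rel_homology_zero :: "('a \<Rightarrow> nat) \<Rightarrow> ('a \<Rightarrow> 'a \<Rightarrow> 'f::field) \<Rightarrow> 'a set \<Rightarrow> bool" where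
  "rel_homology_zero dim kappa C \<longleftrightarrow>
     (\<forall>k c. chain_in dim C k c \<and> rel_boundary kappa C c = (\<lambda>_. 0) \<longrightarrow>
        (\<exists>d. chain_in dim C (Suc k) d \<and> rel_boundary kappa C d = c))"

definition multivector_field :: "'a set \<Rightarrow> ('a \<Rightarrow> 'a \<Rightarrow> 'f::field) \<Rightarrow> 'a set set \<Rightarrow> bool" where
  "multivector_field X kappa V \<longleftrightarrow>
     (\<forall>A\<in>V. A \<noteq> {} \<and> A \<subseteq> X \<and> locally_closed kappa A) \<and>
     (\<forall>A\<in>V. \<forall>B\<in>V. A \<noteq> B \<longrightarrow> A \<inter> B = {}) \<and>
     \<Union>V = X"

definition regular_mv :: "('a \<Rightarrow> nat) \<Rightarrow> ('a \<Rightarrow> 'a \<Rightarrow> 'f::field) \<Rightarrow> 'a set \<Rightarrow> bool" where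
  "regular_mv dim kappa A \<longleftrightarrow> rel_homology_zero dim kappa A"

definition mv_of :: "'a set set \<Rightarrow> 'a \<Rightarrow> 'a set" where
  "mv_of V x = (THE A. A \<in> V \<and> x \<in> A)"

definition flow_map :: "('a \<Rightarrow> 'a \<Rightarrow> 'f::field) \<Rightarrow> 'a set set \<Rightarrow> 'a \<Rightarrow> 'a set" where
  "flow_map kappa V x = lcl kappa {x} \<union> mv_of V x"

definition is_path :: "('a \<Rightarrow> 'a \<Rightarrow> 'f::field) \<Rightarrow> 'a set set \<Rightarrow> 'a list \<Rightarrow> bool" where
  "is_path kappa V xs \<longleftrightarrow> xs \<noteq> [] \<and>
     (\<forall>i. Suc i < length xs \<longrightarrow> xs ! Suc i \<in> flow_map kappa V (xs ! i))"

definition is_solution :: "'a set \<Rightarrow> ('a \<Rightarrow> 'a \<Rightarrow> 'f::field) \<Rightarrow> 'a set set \<Rightarrow> (int \<Rightarrow> 'a) \<Rightarrow> bool" where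
  "is_solution X kappa V \<rho> \<longleftrightarrow> range \<rho> \<subseteq> X \<and> (\<forall>k. \<rho> (k + 1) \<in> flow_map kappa V (\<rho> k))"

definition essential_solution ::
  "'a set \<Rightarrow> ('a \<Rightarrow> nat) \<Rightarrow> ('a \<Rightarrow> 'a \<Rightarrow> 'f::field) \<Rightarrow> 'a set set \<Rightarrow> (int \<Rightarrow> 'a) \<Rightarrow> bool" where
  "essential_solution X dim kappa V \<rho> \<longleftrightarrow> is_solution X kappa V \<rho> \<and>
     (\<forall>k. regular_mv dim kappa (mv_of V (\<rho> k)) \<longrightarrow>
        (\<exists>l1 l2. l1 < k \<and> k < l2 \<and> \<rho> l1 \<notin> mv_of V (\<rho> k) \<and> \<rho> l2 \<notin> mv_of V (\<rho> k)))"

definition invariant_set ::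
  "'a set \<Rightarrow> ('a \<Rightarrow> nat) \<Rightarrow> ('a \<Rightarrow> 'a \<Rightarrow> 'f::field) \<Rightarrow> 'a set set \<Rightarrow> 'a set \<Rightarrow> bool" where
  "invariant_set X dim kappa V A \<longleftrightarrow>
     (\<forall>x\<in>A. \<exists>\<rho>. essential_solution X dim kappa V \<rho> \<and> \<rho> 0 = x \<and> range \<rho> \<subseteq> A)"

definition isolates :: "'a set \<Rightarrow> ('a \<Rightarrow> 'a \<Rightarrow> 'f::field) \<Rightarrow> 'a set set \<Rightarrow> 'a set \<Rightarrow> 'a set \<Rightarrow> bool" where
  "isolates X kappa V N S \<longleftrightarrow> N \<subseteq> X \<and> lclosed kappa N \<and> S \<subseteq> N \<and>
     (\<forall>xs. is_path kappa V xs \<and> set xs \<subseteq> N \<and> hd xs \<in> S \<and> last xs \<in> S \<longrightarrow> set xs \<subseteq> S) \<and>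
     (\<Union>x\<in>S. flow_map kappa V x) \<subseteq> N"

definition isolated_invariant_set ::
  "'a set \<Rightarrow> ('a \<Rightarrow> nat) \<Rightarrow> ('a \<Rightarrow> 'a \<Rightarrow> 'f::field) \<Rightarrow> 'a set set \<Rightarrow> 'a set \<Rightarrow> bool" where
  "isolated_invariant_set X dim kappa V S \<longleftrightarrow>
     invariant_set X dim kappa V S \<and> (\<exists>N. isolates X kappa V N S)"

definition V_compatible :: "'a set set \<Rightarrow> 'a set \<Rightarrow> bool" where
  "V_compatible V A \<longleftrightarrow> (\<exists>W\<subseteq>V. A = \<Union>W)"

definition V_hull :: "('a \<Rightarrow> 'a \<Rightarrow> 'f::field) \<Rightarrow> 'a set set \<Rightarrow> 'a set \<Rightarrow> 'a set" where
  "V_hull kappa V A = \<Inter>{B. V_compatible V B \<and> locally_closed kappa B \<and> A \<subseteq> B}"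

definition alpha_limit :: "('a \<Rightarrow> 'a \<Rightarrow> 'f::field) \<Rightarrow> 'a set set \<Rightarrow> (int \<Rightarrow> 'a) \<Rightarrow> 'a set" where
  "alpha_limit kappa V \<phi> = V_hull kappa V (\<Inter>t\<in>{..0::int}. \<phi> ` {..t})"

definition omega_limit :: "('a \<Rightarrow> 'a \<Rightarrow> 'f::field) \<Rightarrow> 'a set set \<Rightarrow> (int \<Rightarrow> 'a) \<Rightarrow> 'a set" where
  "omega_limit kappa V \<phi> = V_hull kappa V (\<Inter>t\<in>{0::int..}. \<phi> ` {t..})"

end

theory Submission
  imports Defs
begin


lemma face_in_X:
  assumes LC: "lefschetz_complex X dim kappa" and "(y,x) \<in> face_rel kappa" and "x \<in> X"
  shows "y \<in> X"
  using assms(2,3) unfolding face_rel_def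
proof (induction rule: converse_rtrancl_induct)
  case base then show ?case by simp
next
  case (step y z) then show ?case using LC unfolding lefschetz_complex_def by auto
qed

lemma face_refl: "(x,x) \<in> face_rel kappa"
  unfolding face_rel_def by simp

lemma face_trans: "(x,y) \<in> face_rel kappa \<Longrightarrow> (y,z) \<in> face_rel kappa \<Longrightarrow> (x,z) \<in> face_rel kappa"
  unfolding face_rel_def by (rule rtrancl_trans)

lemma lc_convex:
  "locally_closed kappa C \<longleftrightarrow>
   (\<forall>a\<in>C. \<forall>b\<in>C. \<forall>y. (a,y) \<in> face_rel kappa \<longrightarrow> (y,b) \<in> face_rel kappa \<longrightarrow> y \<in> C)"
proof
  assume lc: "locally_closed kappa C"
  show "\<forall>a\<in>C. \<forall>b\<in>C. \<forall>y. (a,y) \<in> face_rel kappa \<longrightarrow> (y,b) \<in> face_rel kappa \<longrightarrow> y \<in> C"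
  proof (intro ballI allI impI)
    fix a b y assume a: "a \<in> C" and b: "b \<in> C" and ay: "(a,y) \<in> face_rel kappa" and yb: "(y,b) \<in> face_rel kappa"
    show "y \<in> C"
    proof (rule ccontr)
      assume "y \<notin> C"
      then have "y \<in> mouth kappa C" using b yb unfolding mouth_def lcl_def by auto
      then have "a \<in> lcl kappa (mouth kappa C)" using ay unfolding lcl_def by auto
      then have "a \<in> mouth kappa C" using lc unfolding locally_closed_def lclosed_def by simp
      then show False using a unfolding mouth_def by simp
    qed
  qed
next
  assume cv: "\<forall>a\<in>C. \<forall>b\<in>C. \<forall>y. (a,y) \<in> face_rel kappa \<longrightarrow> (y,b) \<in> face_rel kappa \<longrightarrow> y \<in> C"
  have "lcl kappa (mouth kappa C) \<subseteq> mouth kappa C"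
  proof
    fix w assume "w \<in> lcl kappa (mouth kappa C)"
    then obtain y where wy: "(w,y) \<in> face_rel kappa" and y: "y \<in> mouth kappa C" unfolding lcl_def by auto
    then obtain b where b: "b \<in> C" and yb: "(y,b) \<in> face_rel kappa" and yC: "y \<notin> C"
      unfolding mouth_def lcl_def by auto
    have "w \<in> lcl kappa C" using b face_trans[OF wy yb] unfolding lcl_def by auto
    moreover have "w \<notin> C" using cv b wy yb yC by blast
    ultimately show "w \<in> mouth kappa C" unfolding mouth_def by simp
  qed
  moreover have "mouth kappa C \<subseteq> lcl kappa (mouth kappa C)"
  proof
    fix x assume "x \<in> mouth kappa C"
    then show "x \<in> lcl kappa (mouth kappa C)" unfolding lcl_def using face_refl by fast
  qed
  ultimately have "lcl kappa (mouth kappa C) = mouth kappa C" by (rule subset_antisym)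
  then show "locally_closed kappa C" unfolding locally_closed_def lclosed_def .
qed

lemma mv_of_eq:
  assumes MV: "multivector_field X kappa V" and "A \<in> V" "x \<in> A"
  shows "mv_of V x = A"
  unfolding mv_of_def
proof (rule the_equality)
  show "A \<in> V \<and> x \<in> A" using assms by simp
next
  fix B assume "B \<in> V \<and> x \<in> B"
  moreover have "\<forall>A\<in>V. \<forall>B\<in>V. A \<noteq> B \<longrightarrow> A \<inter> B = {}" using MV unfolding multivector_field_def by simp
  ultimately show "B = A" using assms(2,3) by blast
qed

lemma mv_of_in:
  assumes MV: "multivector_field X kappa V" and "x \<in> X"
  shows "mv_of V x \<in> V \<and> x \<in> mv_of V x"
proof -
  have "\<Union>V = X" using MV unfolding multivector_field_def by simp
  then obtain A where "A \<in> V" "x \<in> A" using assms(2) by auto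
  then show ?thesis using mv_of_eq[OF MV] by simp
qed

lemma Vcompat_iff:
  assumes MV: "multivector_field X kappa V" and BX: "B \<subseteq> X"
  shows "V_compatible V B \<longleftrightarrow> (\<forall>x\<in>B. mv_of V x \<subseteq> B)"
proof
  assume "V_compatible V B"
  then obtain W where W: "W \<subseteq> V" "B = \<Union>W" unfolding V_compatible_def by auto
  show "\<forall>x\<in>B. mv_of V x \<subseteq> B"
  proof
    fix x assume "x \<in> B"
    then obtain A where "A \<in> W" "x \<in> A" using W by auto
    then have "mv_of V x = A" using mv_of_eq[OF MV] W by auto
    then show "mv_of V x \<subseteq> B" using \<open>A \<in> W\<close> W by auto
  qed
next
  assume cl: "\<forall>x\<in>B. mv_of V x \<subseteq> B"
  have "B \<subseteq> \<Union>{A\<in>V. A \<subseteq> B}"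
  proof
    fix x assume x: "x \<in> B"
    then have "mv_of V x \<in> V \<and> x \<in> mv_of V x" using mv_of_in[OF MV] BX by auto
    then show "x \<in> \<Union>{A\<in>V. A \<subseteq> B}" using cl x by auto
  qed
  moreover have "\<Union>{A\<in>V. A \<subseteq> B} \<subseteq> B" by (rule Union_least) simp
  ultimately have eq: "B = \<Union>{A\<in>V. A \<subseteq> B}" by (rule subset_antisym)
  have sub: "{A\<in>V. A \<subseteq> B} \<subseteq> V" by (rule subsetI) simp
  show "V_compatible V B" unfolding V_compatible_def using sub eq by (rule exI[where x="{A\<in>V. A \<subseteq> B}", OF conjI])
qed

lemma Vcompat_sub:
  assumes MV: "multivector_field X kappa V" and "V_compatible V B"
  shows "B \<subseteq> X"
proof -
  have "\<Union>V = X" using assms(1) unfolding multivector_field_def by simp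
  then show ?thesis using assms(2) unfolding V_compatible_def by auto
qed

lemma walk_concat:
  assumes "\<forall>i<n. (f i, f (Suc i)) \<in> r" "\<forall>i<m. (g i, g (Suc i)) \<in> r" "f n = g 0"
  shows "\<forall>i<n+m. ((\<lambda>i. if i \<le> n then f i else g (i-n)) i, (\<lambda>i. if i \<le> n then f i else g (i-n)) (Suc i)) \<in> r"
proof (intro allI impI)
  fix i assume i: "i < n + m"
  show "((\<lambda>i. if i \<le> n then f i else g (i-n)) i, (\<lambda>i. if i \<le> n then f i else g (i-n)) (Suc i)) \<in> r"
  proof (cases "i < n")
    case True then show ?thesis using assms(1) by auto
  next
    case False
    then have im: "i - n < m" and si: "Suc i - n = Suc (i - n)" using i by auto
    have 1: "(g (i-n), g (Suc (i-n))) \<in> r" using assms(2) im by blast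
    have 2: "(if i \<le> n then f i else g (i-n)) = g (i-n)"
      using False assms(3) by (cases "i = n") auto
    have 3: "(if Suc i \<le> n then f (Suc i) else g (Suc i-n)) = g (Suc (i-n))"
      using False si by simp
    show ?thesis using 1 2 3 by simp
  qed
qed

lemma sol_walk:
  assumes sol: "is_solution X kappa V \<phi>" and inU: "\<forall>s. s0 \<le> s \<and> s \<le> s0 + int d \<longrightarrow> \<phi> s \<in> U"
  shows "(\<phi> s0, \<phi> (s0 + int d)) \<in> {(a,b). a\<in>U \<and> b\<in>U \<and> b \<in> flow_map kappa V a}\<^sup>*"
  using inU
proof (induction d)
  case 0 then show ?case by simp
next
  case (Suc d)
  then have IH: "(\<phi> s0, \<phi> (s0 + int d)) \<in> {(a,b). a\<in>U \<and> b\<in>U \<and> b \<in> flow_map kappa V a}\<^sup>*" by auto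
  have fl: "\<phi> (s0 + int d + 1) \<in> flow_map kappa V (\<phi> (s0 + int d))" using sol unfolding is_solution_def by blast
  have u1: "\<phi> (s0 + int d) \<in> U" and u2: "\<phi> (s0 + int d + 1) \<in> U" using Suc.prems by auto
  have eq: "s0 + int (Suc d) = s0 + int d + 1" by simp
  have st: "(\<phi> (s0 + int d), \<phi> (s0 + int (Suc d))) \<in> {(a,b). a\<in>U \<and> b\<in>U \<and> b \<in> flow_map kappa V a}"
    unfolding eq using fl u1 u2 by simp
  from rtrancl_into_rtrancl[OF IH st] show ?case .
qed



lemma general:
  fixes X :: "'a set" and dim :: "'a \<Rightarrow> nat" and kappa :: "'a \<Rightarrow> 'a \<Rightarrow> 'f::field"
    and V :: "'a set set" and U :: "'a set"
  assumes LC: "lefschetz_complex X dim kappa" and MV: "multivector_field X kappa V"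
    and UX: "U \<subseteq> X" and Une: "U \<noteq> {}"
    and P1: "\<forall>u\<in>U. \<forall>u'\<in>U. (u,u') \<in> {(a,b). a\<in>U \<and> b\<in>U \<and> b \<in> flow_map kappa V a}\<^sup>*"
    and P3: "\<forall>A\<in>V. regular_mv dim kappa A \<longrightarrow> \<not> U \<subseteq> A"
  shows "V_hull kappa V U \<noteq> {} \<and> isolated_invariant_set X dim kappa V (V_hull kappa V U)"
proof -
  define F where "F = {B. V_compatible V B \<and> locally_closed kappa B \<and> U \<subseteq> B}"
  define H where "H = \<Inter>F"
  have HV: "V_hull kappa V U = H" unfolding H_def F_def V_hull_def by simp
  have Xlc: "locally_closed kappa X"
    unfolding lc_convex using face_in_X[OF LC] by blast
  have UVX: "\<Union>V = X" using MV unfolding multivector_field_def by simp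
  have XV: "V_compatible V X" unfolding V_compatible_def using UVX by blast
  have XF: "X \<in> F" using Xlc XV UX unfolding F_def by simp
  have HX: "H \<subseteq> X" unfolding H_def using XF by (rule Inter_lower)
  have UH: "U \<subseteq> H" unfolding H_def F_def by blast
  have Hmv: "\<forall>x\<in>H. mv_of V x \<subseteq> H"
  proof (intro ballI subsetI)
    fix x y assume x: "x \<in> H" and y: "y \<in> mv_of V x"
    show "y \<in> H" unfolding H_def
    proof (rule InterI)
      fix B assume B: "B \<in> F"
      then have xB: "x \<in> B" using x unfolding H_def by blast
      have Bc: "V_compatible V B" using B unfolding F_def by simp
      have "B \<subseteq> X" using Vcompat_sub[OF MV Bc] .
      then have "\<forall>z\<in>B. mv_of V z \<subseteq> B" using Vcompat_iff[OF MV] Bc by blast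
      then show "y \<in> B" using xB y by blast
    qed
  qed
  have Hconv: "\<forall>a\<in>H. \<forall>b\<in>H. \<forall>y. (a,y) \<in> face_rel kappa \<longrightarrow> (y,b) \<in> face_rel kappa \<longrightarrow> y \<in> H"
  proof (intro ballI allI impI)
    fix a b y assume a: "a \<in> H" and b: "b \<in> H" and ay: "(a,y) \<in> face_rel kappa" and yb: "(y,b) \<in> face_rel kappa"
    show "y \<in> H" unfolding H_def
    proof (rule InterI)
      fix B assume B: "B \<in> F"
      then have "a \<in> B" "b \<in> B" using a b unfolding H_def by blast+
      moreover have "locally_closed kappa B" using B unfolding F_def by simp
      ultimately show "y \<in> B" using ay yb unfolding lc_convex by blast
    qed
  qed
  have self: "\<And>x. x \<in> X \<Longrightarrow> x \<in> flow_map kappa V x"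
    unfolding flow_map_def using mv_of_in[OF MV] by blast
  define r where "r = {(a,b). a\<in>H \<and> b\<in>H \<and> b \<in> flow_map kappa V a}"
  have UU: "\<forall>u\<in>U. \<forall>u'\<in>U. (u,u') \<in> r\<^sup>*"
  proof (intro ballI)
    fix u u' assume "u\<in>U" "u'\<in>U"
    then have "(u,u') \<in> {(a,b). a\<in>U \<and> b\<in>U \<and> b \<in> flow_map kappa V a}\<^sup>*" using P1 by blast
    moreover have "{(a,b). a\<in>U \<and> b\<in>U \<and> b \<in> flow_map kappa V a} \<subseteq> r" unfolding r_def using UH by blast
    ultimately show "(u,u') \<in> r\<^sup>*" using rtrancl_mono by blast
  qed
  define R where "R = {x\<in>H. (\<exists>u\<in>U. (u,x)\<in>r\<^sup>*) \<and> (\<exists>u\<in>U. (x,u)\<in>r\<^sup>*)}"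
  have RH: "R \<subseteq> H" unfolding R_def by blast
  have RX: "R \<subseteq> X" using RH HX by blast
  have UR: "U \<subseteq> R" unfolding R_def using UH by blast
  have Rmv: "\<forall>x\<in>R. mv_of V x \<subseteq> R"
  proof (intro ballI subsetI)
    fix x y assume x: "x\<in>R" and y: "y \<in> mv_of V x"
    have xH: "x\<in>H" using x RH by blast
    have yH: "y \<in> H" using Hmv xH y by blast
    have xX: "x \<in> X" using xH HX by blast
    have mvx: "mv_of V x \<in> V" using mv_of_in[OF MV xX] by blast
    have "mv_of V y = mv_of V x" using mv_of_eq[OF MV mvx y] .
    then have "x \<in> mv_of V y" using mv_of_in[OF MV xX] by simp
    then have yx: "(y,x) \<in> r" unfolding r_def flow_map_def using xH yH by blast
    have xy: "(x,y) \<in> r" unfolding r_def flow_map_def using xH yH y by blast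
    obtain u1 where u1: "u1\<in>U" "(u1,x)\<in>r\<^sup>*" using x unfolding R_def by blast
    obtain u2 where u2: "u2\<in>U" "(x,u2)\<in>r\<^sup>*" using x unfolding R_def by blast
    have "(u1,y)\<in>r\<^sup>*" using u1(2) xy by (rule rtrancl_into_rtrancl)
    moreover have "(y,u2)\<in>r\<^sup>*" using yx u2(2) by (rule converse_rtrancl_into_rtrancl)
    ultimately show "y \<in> R" unfolding R_def using yH u1(1) u2(1) by blast
  qed
  have Rconv: "\<forall>a\<in>R. \<forall>b\<in>R. \<forall>y. (a,y) \<in> face_rel kappa \<longrightarrow> (y,b) \<in> face_rel kappa \<longrightarrow> y \<in> R"
  proof (intro ballI allI impI)
    fix a b y assume a: "a \<in> R" and b: "b \<in> R" and ay: "(a,y) \<in> face_rel kappa" and yb: "(y,b) \<in> face_rel kappa"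
    have aH: "a \<in> H" and bH: "b \<in> H" using a b RH by blast+
    have yH: "y \<in> H" using Hconv aH bH ay yb by blast
    have "y \<in> lcl kappa {b}" unfolding lcl_def using yb by blast
    then have by': "(b,y) \<in> r" unfolding r_def flow_map_def using bH yH by blast
    have "a \<in> lcl kappa {y}" unfolding lcl_def using ay by blast
    then have ya: "(y,a) \<in> r" unfolding r_def flow_map_def using aH yH by blast
    obtain u1 where u1: "u1\<in>U" "(u1,b)\<in>r\<^sup>*" using b unfolding R_def by blast
    obtain u2 where u2: "u2\<in>U" "(a,u2)\<in>r\<^sup>*" using a unfolding R_def by blast
    have "(u1,y)\<in>r\<^sup>*" using u1(2) by' by (rule rtrancl_into_rtrancl)
    moreover have "(y,u2)\<in>r\<^sup>*" using ya u2(2) by (rule converse_rtrancl_into_rtrancl)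
    ultimately show "y \<in> R" unfolding R_def using yH u1(1) u2(1) by blast
  qed
  have RV: "V_compatible V R" using Vcompat_iff[OF MV RX] Rmv by blast
  have Rlc: "locally_closed kappa R" unfolding lc_convex using Rconv .
  have RF: "R \<in> F" unfolding F_def using RV Rlc UR by blast
  have HR: "H \<subseteq> R" unfolding H_def using RF by (rule Inter_lower)
  define N where "N = lcl kappa H"
  have NX: "N \<subseteq> X"
  proof
    fix z assume "z \<in> N"
    then obtain h where "h \<in> H" "(z,h) \<in> face_rel kappa" unfolding N_def lcl_def by blast
    then show "z \<in> X" using face_in_X[OF LC] HX by blast
  qed
  have HN: "H \<subseteq> N" unfolding N_def lcl_def using face_refl by fast
  have Ncl: "lclosed kappa N"
  proof -
    have "lcl kappa N \<subseteq> N"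
    proof
      fix z assume "z \<in> lcl kappa N"
      then obtain w where zw: "(z,w) \<in> face_rel kappa" and wN: "w \<in> N" unfolding lcl_def by blast
      from wN obtain h where wh: "(w,h) \<in> face_rel kappa" and h: "h \<in> H" unfolding N_def lcl_def by blast
      have "(z,h) \<in> face_rel kappa" using face_trans[OF zw wh] .
      then show "z \<in> N" unfolding N_def lcl_def using h by blast
    qed
    moreover have "N \<subseteq> lcl kappa N"
    proof
      fix z assume "z \<in> N"
      then show "z \<in> lcl kappa N" unfolding lcl_def using face_refl[of z kappa] by blast
    qed
    ultimately show ?thesis unfolding lclosed_def by (rule subset_antisym)
  qed
  have flowN: "(\<Union>x\<in>H. flow_map kappa V x) \<subseteq> N"
  proof
    fix z assume "z \<in> (\<Union>x\<in>H. flow_map kappa V x)"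
    then obtain x where x: "x \<in> H" "z \<in> flow_map kappa V x" by blast
    then consider "z \<in> lcl kappa {x}" | "z \<in> mv_of V x" unfolding flow_map_def by blast
    then show "z \<in> N"
    proof cases
      case 1 then show ?thesis using x(1) unfolding N_def lcl_def by blast
    next
      case 2 then show ?thesis using x(1) Hmv HN by blast
    qed
  qed
  have pathN: "\<forall>xs. is_path kappa V xs \<and> set xs \<subseteq> N \<and> hd xs \<in> H \<and> last xs \<in> H \<longrightarrow> set xs \<subseteq> H"
  proof (intro allI impI)
    fix xs assume as: "is_path kappa V xs \<and> set xs \<subseteq> N \<and> hd xs \<in> H \<and> last xs \<in> H"
    have ne: "xs \<noteq> []" using as unfolding is_path_def by blast
    have stp: "\<forall>i. Suc i < length xs \<longrightarrow> xs ! Suc i \<in> flow_map kappa V (xs ! i)"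
      using as unfolding is_path_def by blast
    show "set xs \<subseteq> H"
    proof (rule ccontr)
      assume "\<not> set xs \<subseteq> H"
      then obtain y where y: "y \<in> set xs" "y \<notin> H" by blast
      then obtain i where i: "i < length xs" "xs!i \<notin> H" by (metis in_set_conv_nth)
      have pj: "i + j < length xs \<longrightarrow> xs!(i+j) \<notin> H" for j
      proof (induction j)
        case 0 show ?case using i by simp
      next
        case (Suc j)
        show ?case
        proof
          assume lt: "i + Suc j < length xs"
          have wH: "xs!(i+j) \<notin> H" using Suc.IH lt by simp
          have wN: "xs!(i+j) \<in> N" using as lt by (metis Suc_lessD add_Suc_right nth_mem subsetD)
          have zw: "xs!(i + Suc j) \<in> flow_map kappa V (xs!(i+j))" using stp lt by simp
          show "xs!(i + Suc j) \<notin> H"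
          proof
            assume zH: "xs!(i + Suc j) \<in> H"
            from zw consider "xs!(i + Suc j) \<in> lcl kappa {xs!(i+j)}" | "xs!(i + Suc j) \<in> mv_of V (xs!(i+j))"
              unfolding flow_map_def by blast
            then show False
            proof cases
              case 1
              then have zf: "(xs!(i + Suc j), xs!(i+j)) \<in> face_rel kappa" unfolding lcl_def by blast
              obtain h where h: "h \<in> H" "(xs!(i+j),h) \<in> face_rel kappa" using wN unfolding N_def lcl_def by blast
              have "xs!(i+j) \<in> H" using Hconv zH h zf by blast
              then show False using wH by simp
            next
              case 2
              have wX: "xs!(i+j) \<in> X" using wN NX by blast
              have mw: "mv_of V (xs!(i+j)) \<in> V" "xs!(i+j) \<in> mv_of V (xs!(i+j))" using mv_of_in[OF MV wX] by auto
              have "mv_of V (xs!(i + Suc j)) = mv_of V (xs!(i+j))" using mv_of_eq[OF MV mw(1) 2] .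
              then have "xs!(i+j) \<in> mv_of V (xs!(i + Suc j))" using mw(2) by simp
              then show False using Hmv zH wH by blast
            qed
          qed
        qed
      qed
      have "xs ! (i + (length xs - 1 - i)) \<notin> H" using pj[of "length xs - 1 - i"] i by simp
      moreover have "i + (length xs - 1 - i) = length xs - 1" using i by simp
      ultimately have "last xs \<notin> H" using ne by (simp add: last_conv_nth)
      then show False using as by blast
    qed
  qed
  have iso: "isolates X kappa V N H" unfolding isolates_def
    by (intro conjI, fact NX, fact Ncl, fact HN, fact pathN, fact flowN)
  have inv: "invariant_set X dim kappa V H"
    unfolding invariant_set_def
  proof
    fix x assume xH: "x \<in> H"
    obtain u1 u2 where u1U: "u1\<in>U" and u2U: "u2\<in>U"
      and u12: "\<forall>A\<in>V. regular_mv dim kappa A \<longrightarrow> \<not>(u1\<in>A \<and> u2\<in>A)"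
    proof (cases "\<exists>u1\<in>U. \<exists>u2\<in>U. mv_of V u1 \<noteq> mv_of V u2")
      case True
      then obtain u1 u2 where a: "u1\<in>U" "u2\<in>U" "mv_of V u1 \<noteq> mv_of V u2" by blast
      have "\<forall>A\<in>V. regular_mv dim kappa A \<longrightarrow> \<not>(u1\<in>A \<and> u2\<in>A)"
      proof (intro ballI impI notI)
        fix A assume A: "A \<in> V" "regular_mv dim kappa A" "u1\<in>A \<and> u2\<in>A"
        have "mv_of V u1 = A" using mv_of_eq[OF MV A(1)] A(3) by blast
        moreover have "mv_of V u2 = A" using mv_of_eq[OF MV A(1)] A(3) by blast
        ultimately show False using a(3) by simp
      qed
      then show ?thesis using that a(1,2) by blast
    next
      case False
      obtain u0 where u0: "u0\<in>U" using Une by blast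
      have "\<forall>A\<in>V. regular_mv dim kappa A \<longrightarrow> \<not>(u0\<in>A \<and> u0\<in>A)"
      proof (intro ballI impI notI)
        fix A assume A: "A\<in>V" "regular_mv dim kappa A" "u0\<in>A \<and> u0\<in>A"
        have "U \<subseteq> A"
        proof
          fix u assume u: "u\<in>U"
          then have "mv_of V u = mv_of V u0" using False u0 by blast
          also have "\<dots> = A" using mv_of_eq[OF MV A(1)] A(3) by blast
          finally have "mv_of V u = A" .
          moreover have "u \<in> mv_of V u" using mv_of_in[OF MV] u UX by blast
          ultimately show "u \<in> A" by simp
        qed
        then show False using P3 A(1,2) by blast
      qed
      then show ?thesis using that u0 by blast
    qed
    have xR: "x \<in> R" using HR xH by blast
    obtain ua where ua: "ua\<in>U" "(x,ua)\<in>r\<^sup>*" using xR unfolding R_def by blast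
    obtain ub where ub: "ub\<in>U" "(ub,x)\<in>r\<^sup>*" using xR unfolding R_def by blast
    have c1: "(x,u1)\<in>r\<^sup>*" using ua(2) UU ua(1) u1U by (meson rtrancl_trans)
    have c2: "(u1,u2)\<in>r\<^sup>*" using UU u1U u2U by blast
    have c3: "(u2,x)\<in>r\<^sup>*" using ub(2) UU ub(1) u2U by (meson rtrancl_trans)
    obtain n1 f1 where f1: "f1 0 = x" "f1 n1 = u1" "\<forall>i<n1. (f1 i, f1 (Suc i)) \<in> r"
      using c1 unfolding rtrancl_power relpow_fun_conv by blast
    obtain n2 f2 where f2: "f2 0 = u1" "f2 n2 = u2" "\<forall>i<n2. (f2 i, f2 (Suc i)) \<in> r"
      using c2 unfolding rtrancl_power relpow_fun_conv by blast
    obtain n3 f3 where f3: "f3 0 = u2" "f3 n3 = x" "\<forall>i<n3. (f3 i, f3 (Suc i)) \<in> r"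
      using c3 unfolding rtrancl_power relpow_fun_conv by blast
    define g1 where "g1 = (\<lambda>i. if i \<le> n1 then f1 i else f2 (i - n1))"
    have g1: "\<forall>i<n1+n2. (g1 i, g1 (Suc i)) \<in> r"
      using walk_concat[OF f1(3) f2(3)] f1(2) f2(1) unfolding g1_def by simp
    have g1v: "g1 0 = x" "g1 n1 = u1" "g1 (n1+n2) = u2"
      unfolding g1_def using f1 f2 by auto
    define g2 where "g2 = (\<lambda>i. if i \<le> n1+n2 then g1 i else f3 (i - (n1+n2)))"
    have g2: "\<forall>i<n1+n2+n3. (g2 i, g2 (Suc i)) \<in> r"
      using walk_concat[OF g1 f3(3)] g1v(3) f3(1) unfolding g2_def by simp
    have g2v: "g2 0 = x" "g2 n1 = u1" "g2 (n1+n2) = u2" "g2 (n1+n2+n3) = x"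
      unfolding g2_def using g1v f3 by auto
    have loop: "\<forall>i<Suc 0. ((\<lambda>_. x) i, (\<lambda>_. x) (Suc i)) \<in> r"
      unfolding r_def using self xH HX by blast
    define N where "N = n1+n2+n3+1"
    define f where "f = (\<lambda>i. if i \<le> n1+n2+n3 then g2 i else x)"
    have fw: "\<forall>i<N. (f i, f (Suc i)) \<in> r"
      using walk_concat[OF g2 loop] g2v(4) unfolding f_def N_def by simp
    have fv: "f 0 = x" "f n1 = u1" "f (n1+n2) = u2" "f N = x"
      unfolding f_def N_def using g2v by auto
    have Npos: "0 < N" unfolding N_def by simp
    have fH: "f i \<in> H" if "i < N" for i using fw that unfolding r_def by blast
    define \<rho> where "\<rho> = (\<lambda>k::int. f (nat (k mod int N)))"
    have mb: "nat (k mod int N) < N" for k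
      using Npos by (simp add: nat_less_iff)
    have \<rho>step: "\<rho> (k+1) = f (Suc (nat (k mod int N)))" for k
    proof -
      have m0: "0 \<le> k mod int N" "k mod int N < int N" using Npos by simp_all
      have e: "(k+1) mod int N = (k mod int N + 1) mod int N" by (simp add: mod_add_left_eq)
      show ?thesis
      proof (cases "k mod int N + 1 < int N")
        case True
        then have "(k+1) mod int N = k mod int N + 1" using e m0 by simp
        then have "nat ((k+1) mod int N) = Suc (nat (k mod int N))" using m0 by simp
        then show ?thesis unfolding \<rho>_def by simp
      next
        case False
        then have eq: "k mod int N + 1 = int N" using m0 by simp
        then have "(k+1) mod int N = 0" using e by simp
        moreover have "Suc (nat (k mod int N)) = N" using eq m0(1) by (metis Suc_nat_eq_nat_zadd1 add.commute nat_int)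
        ultimately show ?thesis unfolding \<rho>_def using fv by simp
      qed
    qed
    have \<rho>H: "\<rho> k \<in> H" for k unfolding \<rho>_def using fH mb by blast
    have \<rho>r: "(\<rho> k, \<rho> (k+1)) \<in> r" for k
      unfolding \<rho>step using fw mb unfolding \<rho>_def by blast
    have sol: "is_solution X kappa V \<rho>"
      unfolding is_solution_def using \<rho>H HX \<rho>r unfolding r_def by blast
    have ess: "essential_solution X dim kappa V \<rho>"
      unfolding essential_solution_def
    proof (intro conjI sol allI impI)
      fix k assume reg: "regular_mv dim kappa (mv_of V (\<rho> k))"
      define A where "A = mv_of V (\<rho> k)"
      have \<rho>kX: "\<rho> k \<in> X" using \<rho>H HX by blast
      have AV: "A \<in> V" and kA: "\<rho> k \<in> A" using mv_of_in[OF MV \<rho>kX] unfolding A_def by auto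
      have "\<not>(u1\<in>A \<and> u2\<in>A)" using u12 AV reg unfolding A_def by blast
      then obtain j where j: "j < N" "f j \<notin> A"
        using fv unfolding N_def by (metis add_lessD1 less_add_one)
      define d where "d = (int j - k) mod int N"
      have d: "0 \<le> d" "d < int N" unfolding d_def using Npos by simp_all
      have l2mod: "(k + d) mod int N = int j"
      proof -
        have "(k + d) mod int N = (k + (int j - k)) mod int N" unfolding d_def by (simp add: mod_add_right_eq)
        also have "\<dots> = int j" using j(1) by simp
        finally show ?thesis .
      qed
      have \<rho>l2: "\<rho> (k+d) = f j" unfolding \<rho>_def using l2mod by simp
      have dnz: "d \<noteq> 0"
      proof
        assume "d = 0"
        then have "\<rho> k = f j" using \<rho>l2 by simp
        then show False using kA j(2) by simp
      qed
      have l1mod: "(k + d - int N) mod int N = int j" using l2mod by simp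
      have \<rho>l1: "\<rho> (k+d - int N) = f j" unfolding \<rho>_def using l1mod by simp
      show "\<exists>l1 l2. l1 < k \<and> k < l2 \<and> \<rho> l1 \<notin> mv_of V (\<rho> k) \<and> \<rho> l2 \<notin> mv_of V (\<rho> k)"
        apply (rule exI[of _ "k + d - int N"], rule exI[of _ "k + d"])
        using d dnz \<rho>l1 \<rho>l2 j(2) unfolding A_def by simp
    qed
    have "\<rho> 0 = x" unfolding \<rho>_def using fv by simp
    moreover have "range \<rho> \<subseteq> H" using \<rho>H by blast
    ultimately show "\<exists>\<rho>. essential_solution X dim kappa V \<rho> \<and> \<rho> 0 = x \<and> range \<rho> \<subseteq> H"
      using ess by blast
  qed
  have "H \<noteq> {}" using Une UH by blast
  then show ?thesis unfolding HV isolated_invariant_set_def using inv iso by blast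
qed



lemma omega_part:
  fixes X :: "'a set" and dim :: "'a \<Rightarrow> nat" and kappa :: "'a \<Rightarrow> 'a \<Rightarrow> 'f::field"
    and V :: "'a set set" and \<phi> :: "int \<Rightarrow> 'a"
  assumes LC: "lefschetz_complex X dim kappa"
    and MV: "multivector_field X kappa V"
    and ES: "essential_solution X dim kappa V \<phi>"
  shows "omega_limit kappa V \<phi> \<noteq> {} \<and> isolated_invariant_set X dim kappa V (omega_limit kappa V \<phi>)"
proof -
  define U where "U = (\<Inter>t\<in>{0::int..}. \<phi> ` {t..})"
  have fin: "finite X" using LC unfolding lefschetz_complex_def by simp
  have sol: "is_solution X kappa V \<phi>" using ES unfolding essential_solution_def by simp
  have rng: "\<phi> s \<in> X" for s using sol unfolding is_solution_def by blast
  have "\<forall>x\<in>X-U. \<exists>t. t \<ge> 0 \<and> x \<notin> \<phi>`{t..}" unfolding U_def by blast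
  then obtain g where g: "\<forall>x\<in>X-U. g x \<ge> 0 \<and> x \<notin> \<phi>`{g x..}" by metis
  define T where "T = Max (insert 0 (g`(X-U)))"
  have finT: "finite (insert 0 (g`(X-U)))" using fin by simp
  have T0: "T \<ge> 0" unfolding T_def using finT by simp
  have TU: "\<phi> s \<in> U" if "s \<ge> T" for s
  proof (rule ccontr)
    assume "\<phi> s \<notin> U"
    then have xs: "\<phi> s \<in> X - U" using rng by blast
    have "g (\<phi> s) \<le> T" unfolding T_def using finT xs by simp
    then have "\<phi> s \<in> \<phi>`{g (\<phi> s)..}" using that by auto
    then show False using g xs by blast
  qed
  have inf: "\<exists>s\<ge>t. \<phi> s = u" if "u \<in> U" for u t
  proof -
    have "u \<in> \<phi>`{max t 0..}" using that unfolding U_def by simp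
    then show ?thesis by force
  qed
  have UX: "U \<subseteq> X" unfolding U_def using rng by blast
  have Une: "U \<noteq> {}" using TU[of T] by blast
  have P1: "\<forall>u\<in>U. \<forall>u'\<in>U. (u,u') \<in> {(a,b). a\<in>U \<and> b\<in>U \<and> b \<in> flow_map kappa V a}\<^sup>*"
  proof (intro ballI)
    fix u u' assume u: "u\<in>U" and u': "u'\<in>U"
    obtain s0 where s0: "s0 \<ge> T" "\<phi> s0 = u" using inf[OF u] by blast
    obtain s1 where s1: "s1 \<ge> s0" "\<phi> s1 = u'" using inf[OF u'] by blast
    have "\<forall>s. s0 \<le> s \<and> s \<le> s0 + int (nat (s1 - s0)) \<longrightarrow> \<phi> s \<in> U" using TU s0 by auto
    from sol_walk[OF sol this] show "(u,u') \<in> {(a,b). a\<in>U \<and> b\<in>U \<and> b \<in> flow_map kappa V a}\<^sup>*"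
      using s0 s1 by simp
  qed
  have P3: "\<forall>A\<in>V. regular_mv dim kappa A \<longrightarrow> \<not> U \<subseteq> A"
  proof (intro ballI impI notI)
    fix A assume A: "A \<in> V" "regular_mv dim kappa A" "U \<subseteq> A"
    have "\<phi> T \<in> A" using TU[of T] A(3) by blast
    then have mA: "mv_of V (\<phi> T) = A" using mv_of_eq[OF MV A(1)] by blast
    then obtain l2 where "l2 > T" "\<phi> l2 \<notin> A"
      using ES A(2) unfolding essential_solution_def by metis
    then show False using TU[of l2] A(3) by auto
  qed
  show ?thesis unfolding omega_limit_def U_def[symmetric]
    using general[OF LC MV UX Une P1 P3] .
qed

lemma alpha_part:
  fixes X :: "'a set" and dim :: "'a \<Rightarrow> nat" and kappa :: "'a \<Rightarrow> 'a \<Rightarrow> 'f::field"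
    and V :: "'a set set" and \<phi> :: "int \<Rightarrow> 'a"
  assumes LC: "lefschetz_complex X dim kappa"
    and MV: "multivector_field X kappa V"
    and ES: "essential_solution X dim kappa V \<phi>"
  shows "alpha_limit kappa V \<phi> \<noteq> {} \<and> isolated_invariant_set X dim kappa V (alpha_limit kappa V \<phi>)"
proof -
  define U where "U = (\<Inter>t\<in>{..0::int}. \<phi> ` {..t})"
  have fin: "finite X" using LC unfolding lefschetz_complex_def by simp
  have sol: "is_solution X kappa V \<phi>" using ES unfolding essential_solution_def by simp
  have rng: "\<phi> s \<in> X" for s using sol unfolding is_solution_def by blast
  have "\<forall>x\<in>X-U. \<exists>t. t \<le> 0 \<and> x \<notin> \<phi>`{..t}" unfolding U_def by blast
  then obtain g where g: "\<forall>x\<in>X-U. g x \<le> 0 \<and> x \<notin> \<phi>`{..g x}" by metis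
  define T where "T = Min (insert 0 (g`(X-U)))"
  have finT: "finite (insert 0 (g`(X-U)))" using fin by simp
  have T0: "T \<le> 0" unfolding T_def using finT by simp
  have TU: "\<phi> s \<in> U" if "s \<le> T" for s
  proof (rule ccontr)
    assume "\<phi> s \<notin> U"
    then have xs: "\<phi> s \<in> X - U" using rng by blast
    have "T \<le> g (\<phi> s)" unfolding T_def using finT xs by simp
    then have "\<phi> s \<in> \<phi>`{..g (\<phi> s)}" using that by auto
    then show False using g xs by blast
  qed
  have inf: "\<exists>s\<le>t. \<phi> s = u" if "u \<in> U" for u t
  proof -
    have "u \<in> \<phi>`{..min t 0}" using that unfolding U_def by simp
    then show ?thesis by force
  qed
  have UX: "U \<subseteq> X" unfolding U_def using rng by blast
  have Une: "U \<noteq> {}" using TU[of T] by blast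
  have P1: "\<forall>u\<in>U. \<forall>u'\<in>U. (u,u') \<in> {(a,b). a\<in>U \<and> b\<in>U \<and> b \<in> flow_map kappa V a}\<^sup>*"
  proof (intro ballI)
    fix u u' assume u: "u\<in>U" and u': "u'\<in>U"
    obtain s1 where s1: "s1 \<le> T" "\<phi> s1 = u'" using inf[OF u'] by blast
    obtain s0 where s0: "s0 \<le> s1" "\<phi> s0 = u" using inf[OF u] by blast
    have "\<forall>s. s0 \<le> s \<and> s \<le> s0 + int (nat (s1 - s0)) \<longrightarrow> \<phi> s \<in> U" using TU s0 s1 by auto
    from sol_walk[OF sol this] show "(u,u') \<in> {(a,b). a\<in>U \<and> b\<in>U \<and> b \<in> flow_map kappa V a}\<^sup>*"
      using s0 s1 by simp
  qed
  have P3: "\<forall>A\<in>V. regular_mv dim kappa A \<longrightarrow> \<not> U \<subseteq> A"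
  proof (intro ballI impI notI)
    fix A assume A: "A \<in> V" "regular_mv dim kappa A" "U \<subseteq> A"
    have "\<phi> T \<in> A" using TU[of T] A(3) by blast
    then have mA: "mv_of V (\<phi> T) = A" using mv_of_eq[OF MV A(1)] by blast
    then obtain l1 where "l1 < T" "\<phi> l1 \<notin> A"
      using ES A(2) unfolding essential_solution_def by metis
    then show False using TU[of l1] A(3) by auto
  qed
  show ?thesis unfolding alpha_limit_def U_def[symmetric]
    using general[OF LC MV UX Une P1 P3] .
qed

theorem mainTheorem2:
  fixes X :: "'a set" and dim :: "'a \<Rightarrow> nat" and kappa :: "'a \<Rightarrow> 'a \<Rightarrow> 'f::field"
    and V :: "'a set set" and \<phi> :: "int \<Rightarrow> 'a"
  assumes "lefschetz_complex X dim kappa"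
    and "multivector_field X kappa V"
    and "essential_solution X dim kappa V \<phi>"
  shows "alpha_limit kappa V \<phi> \<noteq> {} \<and> isolated_invariant_set X dim kappa V (alpha_limit kappa V \<phi>)
       \<and> omega_limit kappa V \<phi> \<noteq> {} \<and> isolated_invariant_set X dim kappa V (omega_limit kappa V \<phi>)"
  using alpha_part[OF assms] omega_part[OF assms] by blast

end
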